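(* Let $n\ge1$ and let $K$ be a simplicial complex on $[m]$. For $k\in[m]$ let $\mathrm{Crit}_k=\mathrm{Crit}(K_{[k]})$ (with $K_{[k]}$ regarded as a complex on $[k]$), and for $k\in[m-1]$ let $\mathrm{Crit}_{k\bullet}=\mathrm{Crit}(\mathrm{link}_{K_{[k+1]}}(k+1))$ (regarded as a complex on $[k]$). Then: (i) $\mathrm{Crit}_1=\{e_-^0\}$ if $\{1\}\in K$, and $\mathrm{Crit}_1=\{e_-^0,e_+^{n-1}\}$ if $\{1\}\notin K$. (ii) For $k\in[m-1]$, $$\mathrm{Crit}_{k+1}=\big(\mathrm{Crit}_k^-\cup\mathrm{Crit}_k^+\cup\mathrm{Crit}_{k\bullet}^\bullet\big)\setminus\big(\mathrm{Crit}_k^\bullet\cup\mathrm{Crit}_{k\bullet}^+\big).$$ In particular, every critical cell of $\mathcal{M}_K$ is a product of cells from $\{e_-^0,e_+^{n-1},e_\bullet^n\}$.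
   Context: Give $D^n$ the regular CW structure with cells $e_-^i,e_+^i$ for $0\le i\le n-1$ (for each $i$, $e_\pm^i$ are the two open hemispheres of $S^i\subseteq S^{n-1}$, so the closure of $e_\pm^{i}$ is $e_\pm^i\cup\bigcup_{j<i}(e_-^j\cup e_+^j)$) and the top cell $e_\bullet^n$ with boundary $S^{n-1}$; give $(D^n)^k$ the product cell structure with cells $c=c_1\times\dots\times c_k$. A simplicial complex $L$ on $[k]$ is a family of subsets of $[k]$ closed under subsets (possibly empty as a family). For a cell $c$ let $\mathrm{supp}(c)=\{i:c_i=e_\bullet^n\}$; $\mathcal{Z}_L(D^n,S^{n-1})$ is the subcomplex of cells $c$ with $\mathrm{supp}(c)\in L$. $G_L$ is the directed graph on these cells with an edge $c\to c'$ when $c'$ lies in the closure of $c$ and $\dim c'=\dim c-1$. Let $\mathcal{M}$ consist of the edges $e_-^{i+1}\to e_+^i$ ($0\le i\le n-2$) and $e_\bullet^n\to e_+^{n-1}$. Put $\mathcal{M}_1=\{c\to c'\in G_L: c_1\to c_1'\in\mathcal{M}\}$ and, for $1\le j\le k-1$, $\mathcal{M}_{j+1}=\{c\to c'\in G_L:$ neither $c$ nor $c'$ lies in an edge of $\mathcal{M}_1\cup\dots\cup\mathcal{M}_j$, and $c_{j+1}\to c'_{j+1}\in\mathcal{M}\}$; $\mathcal{M}_L=\bigcup_j\mathcal{M}_j$. $\mathrm{Crit}(L)$ is the set of cells of $\mathcal{Z}_L(D^n,S^{n-1})$ lying in no edge of $\mathcal{M}_L$ (critical cells). $K_{[k]}=\{\sigma\in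 K:\sigma\subseteq[k]\}$ and $\mathrm{link}_L(v)=\{\sigma\in L: v\notin\sigma,\ \sigma\cup\{v\}\in L\}$. For a set $\mathcal{C}$ of cells of $(D^n)^k$, $\mathcal{C}^-=\{c\times e_-^0: c\in\mathcal{C}\}$, $\mathcal{C}^+=\{c\times e_+^{n-1}: c\in\mathcal{C}\}$, $\mathcal{C}^\bullet=\{c\times e_\bullet^n:c\in\mathcal{C}\}$ (cells of $(D^n)^{k+1}$). *)

theory Defs
  imports Main
begin

text \<open>Cells of the disc D^n: Mn i = e_-^i, Pl i = e_+^i (0 <= i <= n-1), Bt = e_bullet^n.\<close>
datatype dcell = Mn nat | Pl nat | Bt

definition valid_dcell :: "nat \<Rightarrow> dcell \<Rightarrow> bool" where
  "valid_dcell n e = (case e of Mn i \<Rightarrow> i < n | Pl i \<Rightarrow> i < n | Bt \<Rightarrow> True)"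

definition ddim :: "nat \<Rightarrow> dcell \<Rightarrow> nat" where
  "ddim n e = (case e of Mn i \<Rightarrow> i | Pl i \<Rightarrow> i | Bt \<Rightarrow> n)"

definition in_dclos :: "nat \<Rightarrow> dcell \<Rightarrow> dcell \<Rightarrow> bool" where
  "in_dclos n e' e = (e' = e \<or> (e = Bt \<and> valid_dcell n e') \<or>
     (\<exists>i j. (e = Mn i \<or> e = Pl i) \<and> (e' = Mn j \<or> e' = Pl j) \<and> j < i))"

text \<open>Product cells of (D^n)^k: lists of length k; coordinate i (1-based) is entry i-1.\<close>
definition pcells :: "nat \<Rightarrow> nat \<Rightarrow> dcell list set" where
  "pcells k n = {c. length c = k \<and> (\<forall>e\<in>set c. valid_dcell n e)}"

definition pdim :: "nat \<Rightarrow> dcell list \<Rightarrow> nat" where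
  "pdim n c = sum_list (map (ddim n) c)"

definition supp :: "dcell list \<Rightarrow> nat set" where
  "supp c = {i. 1 \<le> i \<and> i \<le> length c \<and> c ! (i - 1) = Bt}"

definition simplicial_complex :: "nat \<Rightarrow> nat set set \<Rightarrow> bool" where
  "simplicial_complex k L = ((\<forall>\<sigma>\<in>L. \<sigma> \<subseteq> {1..k}) \<and> (\<forall>\<sigma>\<in>L. \<forall>\<tau>. \<tau> \<subseteq> \<sigma> \<longrightarrow> \<tau> \<in> L))"

text \<open>Cells of the polyhedral product Z_L(D^n, S^{n-1}) for L on [k].\<close>
definition ZL :: "nat set set \<Rightarrow> nat \<Rightarrow> nat \<Rightarrow> dcell list set" where
  "ZL L k n = {c \<in> pcells k n. supp c \<in> L}"

definition GL :: "nat set set \<Rightarrow> nat \<Rightarrow> nat \<Rightarrow> (dcell list \<times> dcell list) set" where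
  "GL L k n = {(c, c'). c \<in> ZL L k n \<and> c' \<in> ZL L k n \<and> list_all2 (in_dclos n) c' c
                 \<and> pdim n c' + 1 = pdim n c}"

definition Mbase :: "nat \<Rightarrow> (dcell \<times> dcell) set" where
  "Mbase n = {(Mn (i + 1), Pl i) | i. i + 2 \<le> n} \<union> {(Bt, Pl (n - 1))}"

definition verts :: "('a \<times> 'a) set \<Rightarrow> 'a set" where
  "verts E = fst ` E \<union> snd ` E"

primrec Mupto :: "nat set set \<Rightarrow> nat \<Rightarrow> nat \<Rightarrow> nat \<Rightarrow> (dcell list \<times> dcell list) set" where
  "Mupto L k n 0 = {}"
| "Mupto L k n (Suc j) = Mupto L k n j \<union>
     {(c, c') \<in> GL L k n. c \<notin> verts (Mupto L k n j) \<and> c' \<notin> verts (Mupto L k n j)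
        \<and> (c ! j, c' ! j) \<in> Mbase n}"

definition Mmatch :: "nat set set \<Rightarrow> nat \<Rightarrow> nat \<Rightarrow> (dcell list \<times> dcell list) set" where
  "Mmatch L k n = Mupto L k n k"

definition Crit :: "nat set set \<Rightarrow> nat \<Rightarrow> nat \<Rightarrow> dcell list set" where
  "Crit L k n = ZL L k n - verts (Mmatch L k n)"

definition restr :: "nat set set \<Rightarrow> nat \<Rightarrow> nat set set" where
  "restr K k = {\<sigma> \<in> K. \<sigma> \<subseteq> {1..k}}"

definition link :: "nat set set \<Rightarrow> nat \<Rightarrow> nat set set" where
  "link L v = {\<sigma> \<in> L. v \<notin> \<sigma> \<and> insert v \<sigma> \<in> L}"

definition ext_minus :: "dcell list set \<Rightarrow> dcell list set" where
  "ext_minus C = (\<lambda>c. c @ [Mn 0]) ` C"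

definition ext_plus :: "nat \<Rightarrow> dcell list set \<Rightarrow> dcell list set" where
  "ext_plus n C = (\<lambda>c. c @ [Pl (n - 1)]) ` C"

definition ext_bullet :: "dcell list set \<Rightarrow> dcell list set" where
  "ext_bullet C = (\<lambda>c. c @ [Bt]) ` C"

end

theory Submission
  imports Defs
begin

definition sl :: "nat set set \<Rightarrow> nat \<Rightarrow> dcell \<Rightarrow> nat set set" where
  "sl L k x = (if x = Bt then {\<sigma>. insert (Suc k) \<sigma> \<in> L} else L)"

lemma supp_snoc: "length d = k \<Longrightarrow> supp (d@[x]) = (if x = Bt then insert (Suc k) (supp d) else supp d)"
  unfolding supp_def by (auto simp: nth_append le_Suc_eq split: if_splits)

lemma ZL_snoc: "length d = k \<Longrightarrow> d@[x] \<in> ZL L (Suc k) n \<longleftrightarrow> valid_dcell n x \<and> d \<in> ZL (sl L k x) k n"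
  unfolding ZL_def pcells_def sl_def by (auto simp: supp_snoc)

lemma ZL_len: "c \<in> ZL L k n \<Longrightarrow> length c = k"
  unfolding ZL_def pcells_def by auto

lemma in_dclos_dim: "in_dclos n e' e \<Longrightarrow> e' = e \<or> ddim n e' < ddim n e"
  unfolding in_dclos_def ddim_def valid_dcell_def by (auto split: dcell.splits)

lemma Mbase_props: "n \<ge> 1 \<Longrightarrow> (a,b) \<in> Mbase n \<Longrightarrow> ddim n b + 1 = ddim n a \<and> in_dclos n b a"
  unfolding Mbase_def ddim_def in_dclos_def valid_dcell_def by auto

lemma pdim_nth: "pdim n c = (\<Sum>i = 0..<length c. ddim n (c!i))"
  unfolding pdim_def by (simp add: sum_list_sum_nth)

lemma GL_stage:
  assumes "j < k" "n \<ge> 1"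
  shows "((c,c') \<in> GL L k n \<and> (c!j,c'!j) \<in> Mbase n) \<longleftrightarrow>
         (c \<in> ZL L k n \<and> c' \<in> ZL L k n \<and> c' = c[j := c'!j] \<and> (c!j,c'!j) \<in> Mbase n)"
proof
  assume h: "(c,c') \<in> GL L k n \<and> (c!j,c'!j) \<in> Mbase n"
  hence Z: "c \<in> ZL L k n" "c' \<in> ZL L k n" and la: "list_all2 (in_dclos n) c' c"
    and pd: "pdim n c' + 1 = pdim n c" and mb: "(c!j,c'!j) \<in> Mbase n" unfolding GL_def by auto
  have lc: "length c = k" "length c' = k" using Z ZL_len by auto
  have cl: "\<And>i. i < k \<Longrightarrow> in_dclos n (c'!i) (c!i)" using la lc by (simp add: list_all2_conv_all_nth)
  define f where "f i = ddim n (c!i)" for i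
  define g where "g i = ddim n (c'!i)" for i
  have le: "\<And>i. i < k \<Longrightarrow> g i \<le> f i" unfolding f_def g_def using cl in_dclos_dim by fastforce
  have gj: "g j + 1 = f j" unfolding f_def g_def using Mbase_props[OF assms(2) mb] by simp
  have jin: "j \<in> {0..<k}" using assms by simp
  have s1: "sum g {0..<k} + 1 = sum f {0..<k}" using pd lc unfolding pdim_nth f_def g_def by simp
  have "sum g {0..<k} = g j + sum g ({0..<k} - {j})" by (rule sum.remove[OF _ jin]) simp
  moreover have "sum f {0..<k} = f j + sum f ({0..<k} - {j})" by (rule sum.remove[OF _ jin]) simp
  ultimately have eqs: "sum g ({0..<k} - {j}) = sum f ({0..<k} - {j})" using s1 gj by simp
  have oth: "\<And>i. i < k \<Longrightarrow> i \<noteq> j \<Longrightarrow> c'!i = c!i"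
  proof -
    fix i assume "i < k" "i \<noteq> j"
    hence "g i = f i" using sum_mono_inv[OF eqs, of i] le by auto
    thus "c'!i = c!i" using in_dclos_dim[OF cl[OF \<open>i<k\<close>]] unfolding f_def g_def by auto
  qed
  have "c' = c[j := c'!j]"
    by (rule nth_equalityI) (use lc oth assms in \<open>auto simp: nth_list_update\<close>)
  thus "c \<in> ZL L k n \<and> c' \<in> ZL L k n \<and> c' = c[j := c'!j] \<and> (c!j,c'!j) \<in> Mbase n"
    using Z mb by simp
next
  assume h: "c \<in> ZL L k n \<and> c' \<in> ZL L k n \<and> c' = c[j := c'!j] \<and> (c!j,c'!j) \<in> Mbase n"
  define b where "b = c'!j"
  have lc: "length c = k" using h ZL_len by auto
  have c': "c' = c[j := b]" using h b_def by simp
  have mb: "ddim n b + 1 = ddim n (c!j) \<and> in_dclos n b (c!j)" using Mbase_props[OF assms(2)] h b_def by auto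
  have dec: "c = take j c @ c!j # drop (Suc j) c" using assms lc by (simp add: id_take_nth_drop)
  have dec': "c' = take j c @ b # drop (Suc j) c" using assms lc c' by (simp add: upd_conv_take_nth_drop)
  have e1: "pdim n c = pdim n (take j c @ c!j # drop (Suc j) c)" using dec by simp
  have e2: "pdim n c' = pdim n (take j c @ b # drop (Suc j) c)" using dec' by simp
  have "pdim n c' + 1 = pdim n c"
    unfolding e1 e2 unfolding pdim_def using mb by simp
  moreover have "list_all2 (in_dclos n) c' c"
    unfolding c' list_all2_conv_all_nth
  proof (intro conjI allI impI)
    fix i assume "i < length (c[j:=b])"
    thus "in_dclos n (c[j := b] ! i) (c ! i)"
      using mb assms lc by (cases "i = j") (auto simp: in_dclos_def)
  qed simp
  ultimately show "(c,c') \<in> GL L k n \<and> (c!j,c'!j) \<in> Mbase n" using h unfolding GL_def by auto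
qed

lemma Mupto_sub: "(c,c') \<in> Mupto L k n j \<Longrightarrow> c \<in> ZL L k n \<and> c' \<in> ZL L k n"
  by (induction j) (auto simp: GL_def)

lemma verts_iff: "x \<in> verts E \<longleftrightarrow> (\<exists>y. (x,y) \<in> E) \<or> (\<exists>y. (y,x) \<in> E)"
  unfolding verts_def by force

lemma snoc_ex: "length c = Suc k \<Longrightarrow> \<exists>d x. c = d @ [x] \<and> length d = k"
  by (metis append_butlast_last_id length_butlast diff_Suc_1 length_0_conv nat.distinct(1))

lemma Mupto_snoc:
  assumes "n \<ge> 1"
  shows "j \<le> k \<Longrightarrow> (c,c') \<in> Mupto L (Suc k) n j \<longleftrightarrow>
    (\<exists>d d' x. c = d@[x] \<and> c' = d'@[x] \<and> valid_dcell n x \<and> (d,d') \<in> Mupto (sl L k x) k n j)"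
proof (induction j arbitrary: c c')
  case 0
  then show ?case by simp
next
  case (Suc j)
  hence jk: "j < k" by simp
  have IH: "\<And>c c'. (c,c') \<in> Mupto L (Suc k) n j \<longleftrightarrow>
    (\<exists>d d' x. c = d@[x] \<and> c' = d'@[x] \<and> valid_dcell n x \<and> (d,d') \<in> Mupto (sl L k x) k n j)"
    using Suc.IH jk by simp
  have V: "\<And>d x. d@[x] \<in> verts (Mupto L (Suc k) n j) \<longleftrightarrow> valid_dcell n x \<and> d \<in> verts (Mupto (sl L k x) k n j)"
    unfolding verts_iff IH by auto
  have stage: "(c,c') \<in> GL L (Suc k) n \<and> c \<notin> verts (Mupto L (Suc k) n j) \<and> c' \<notin> verts (Mupto L (Suc k) n j)
       \<and> (c!j, c'!j) \<in> Mbase n \<longleftrightarrow>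
     (\<exists>d d' x. c = d@[x] \<and> c' = d'@[x] \<and> valid_dcell n x \<and>
        (d,d') \<in> GL (sl L k x) k n \<and> d \<notin> verts (Mupto (sl L k x) k n j) \<and> d' \<notin> verts (Mupto (sl L k x) k n j)
       \<and> (d!j, d'!j) \<in> Mbase n)" (is "?A \<longleftrightarrow> ?B")
  proof
    have jk1: "j < Suc k" using jk by simp
    assume A: ?A
    hence G: "c \<in> ZL L (Suc k) n \<and> c' \<in> ZL L (Suc k) n \<and> c' = c[j := c'!j] \<and> (c!j,c'!j) \<in> Mbase n"
      using GL_stage[OF jk1 assms, of c c' L] A by blast
    have Gz: "c \<in> ZL L (Suc k) n" "c' \<in> ZL L (Suc k) n" using G by auto
    have Gu: "c' = c[j := c'!j]" using G by blast
    have Gm: "(c!j,c'!j) \<in> Mbase n" using G by blast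
    define b where "b = c'!j"
    have Gu': "c' = c[j := b]" using Gu b_def by simp
    have Gm': "(c!j, b) \<in> Mbase n" using Gm b_def by simp
    obtain d x where dx: "c = d@[x]" "length d = k" using snoc_ex Gz ZL_len by blast
    have c'e: "c' = d[j := b] @ [x]" using Gu' dx jk by (simp add: list_update_append)
    define d' where "d' = d[j := b]"
    have ld': "length d' = k" using dx d'_def by simp
    have c'e2: "c' = d'@[x]" using c'e d'_def by simp
    have nj: "c!j = d!j" "d'!j = b" using dx jk d'_def by (auto simp: nth_append)
    have z: "valid_dcell n x" "d \<in> ZL (sl L k x) k n" "d' \<in> ZL (sl L k x) k n"
      using Gz dx c'e2 ld' ZL_snoc by auto
    have "(d,d') \<in> GL (sl L k x) k n \<and> (d!j, d'!j) \<in> Mbase n"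
      using GL_stage[OF jk assms, of d d' "sl L k x"] z Gm' nj d'_def by auto
    moreover have "d \<notin> verts (Mupto (sl L k x) k n j)" "d' \<notin> verts (Mupto (sl L k x) k n j)"
      using A V dx c'e2 z by auto
    ultimately show ?B using dx c'e2 z by blast
  next
    assume ?B
    then obtain d d' x where B: "c = d@[x]" "c' = d'@[x]" "valid_dcell n x"
        "(d,d') \<in> GL (sl L k x) k n" "d \<notin> verts (Mupto (sl L k x) k n j)" "d' \<notin> verts (Mupto (sl L k x) k n j)"
       "(d!j, d'!j) \<in> Mbase n" by blast
    hence G: "d \<in> ZL (sl L k x) k n \<and> d' \<in> ZL (sl L k x) k n \<and> d' = d[j := d'!j]"
      using GL_stage[OF jk assms, of d d' "sl L k x"] by blast
    have ld: "length d = k" "length d' = k" using G ZL_len by blast+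
    have Gd: "d' = d[j := d'!j]" using G by blast
    have nj: "c!j = d!j" "c'!j = d'!j" using B ld jk by (auto simp: nth_append)
    have z: "c \<in> ZL L (Suc k) n" "c' \<in> ZL L (Suc k) n" using ZL_snoc B G ld by blast+
    have upd: "c' = c[j := c'!j]" using B Gd ld jk nj by (metis list_update_append1)
    have jk1: "j < Suc k" using jk by simp
    have "(c,c') \<in> GL L (Suc k) n" using GL_stage[OF jk1 assms, of c c' L] z upd B nj by auto
    thus ?A using V B nj by auto
  qed
  show ?case
    unfolding Mupto.simps
    apply (simp only: Un_iff IH)
    using stage by blast
qed


lemma verts_snoc:
  assumes "n \<ge> 1" "j \<le> k"
  shows "d@[x] \<in> verts (Mupto L (Suc k) n j) \<longleftrightarrow> valid_dcell n x \<and> d \<in> verts (Mupto (sl L k x) k n j)"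
  unfolding verts_iff Mupto_snoc[OF assms] by auto

lemma U_snoc:
  assumes "n \<ge> 1" "length e = k"
  shows "e@[y] \<in> ZL L (Suc k) n \<and> e@[y] \<notin> verts (Mupto L (Suc k) n k) \<longleftrightarrow>
     valid_dcell n y \<and> e \<in> Crit (sl L k y) k n"
  unfolding Crit_def Mmatch_def using ZL_snoc[OF assms(2)] verts_snoc[OF assms(1) le_refl] by auto

lemma crit_snoc0:
  assumes n: "n \<ge> 1" and ld: "length d = k"
  shows "d@[x] \<in> Crit L (Suc k) n \<longleftrightarrow>
    (valid_dcell n x \<and> d \<in> Crit (sl L k x) k n) \<and>
    \<not>(\<exists>b. (x,b) \<in> Mbase n \<and> valid_dcell n b \<and> d \<in> Crit (sl L k b) k n) \<and>
    \<not>(\<exists>a. (a,x) \<in> Mbase n \<and> valid_dcell n a \<and> d \<in> Crit (sl L k a) k n)"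
proof -
  define M where "M = Mupto L (Suc k) n k"
  define U where "U c \<longleftrightarrow> c \<in> ZL L (Suc k) n \<and> c \<notin> verts M" for c
  have Us: "\<And>e y. length e = k \<Longrightarrow> U (e@[y]) \<longleftrightarrow> valid_dcell n y \<and> e \<in> Crit (sl L k y) k n"
    unfolding U_def M_def using U_snoc[OF n] by blast
  define E where "E = {(c, c'). (c,c') \<in> GL L (Suc k) n \<and> c \<notin> verts M \<and> c' \<notin> verts M \<and> (c!k, c'!k) \<in> Mbase n}"
  have kk: "k < Suc k" by simp
  have Eiff: "(c,c') \<in> E \<longleftrightarrow> U c \<and> U c' \<and> c' = c[k := c'!k] \<and> (c!k, c'!k) \<in> Mbase n" for c c'
    unfolding E_def U_def using GL_stage[OF kk n, of c c' L] by auto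
  have Mm: "Mmatch L (Suc k) n = M \<union> E" unfolding Mmatch_def M_def E_def by simp
  have ck: "(d@[y])!k = y" for y using ld nth_append_length by metis
  have cu: "(d@[y])[k := z] = d@[z]" for y z using ld list_update_length by metis
  have out: "(\<exists>c'. (d@[x], c') \<in> E) \<longleftrightarrow> (\<exists>b. (x,b) \<in> Mbase n \<and> U (d@[x]) \<and> U (d@[b]))"
  proof
    assume "\<exists>c'. (d@[x], c') \<in> E"
    then obtain c' where "(d@[x], c') \<in> E" by blast
    hence h: "U (d@[x])" "U c'" "c' = d@[c'!k]" "(x, c'!k) \<in> Mbase n" unfolding Eiff ck cu by auto
    thus "\<exists>b. (x,b) \<in> Mbase n \<and> U (d@[x]) \<and> U (d@[b])" by metis
  next
    assume "\<exists>b. (x,b) \<in> Mbase n \<and> U (d@[x]) \<and> U (d@[b])"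
    then obtain b where "(x,b) \<in> Mbase n" "U (d@[x])" "U (d@[b])" by blast
    hence "(d@[x], d@[b]) \<in> E" unfolding Eiff ck cu by simp
    thus "\<exists>c'. (d@[x], c') \<in> E" by blast
  qed
  have inn: "(\<exists>c0. (c0, d@[x]) \<in> E) \<longleftrightarrow> (\<exists>a. (a,x) \<in> Mbase n \<and> U (d@[a]) \<and> U (d@[x]))"
  proof
    assume "\<exists>c0. (c0, d@[x]) \<in> E"
    then obtain c0 where "(c0, d@[x]) \<in> E" by blast
    hence h: "U c0" "U (d@[x])" "d@[x] = c0[k := x]" "(c0!k, x) \<in> Mbase n" unfolding Eiff ck by auto
    have "c0 \<in> ZL L (Suc k) n" using h U_def by blast
    then obtain e a where ea: "c0 = e@[a]" "length e = k" using snoc_ex ZL_len by blast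
    have "d@[x] = e@[x]" using h(3) ea list_update_length by metis
    hence "e = d" by simp
    thus "\<exists>a. (a,x) \<in> Mbase n \<and> U (d@[a]) \<and> U (d@[x])" using h ea by (metis ck)
  next
    assume "\<exists>a. (a,x) \<in> Mbase n \<and> U (d@[a]) \<and> U (d@[x])"
    then obtain a where "(a,x) \<in> Mbase n" "U (d@[a])" "U (d@[x])" by blast
    hence "(d@[a], d@[x]) \<in> E" unfolding Eiff ck cu by simp
    thus "\<exists>c0. (c0, d@[x]) \<in> E" by blast
  qed
  have "d@[x] \<in> Crit L (Suc k) n \<longleftrightarrow> U (d@[x]) \<and> \<not>(\<exists>c'. (d@[x], c') \<in> E) \<and> \<not>(\<exists>c0. (c0, d@[x]) \<in> E)"
    unfolding Crit_def Mm U_def by (simp add: verts_iff) blast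
  also have "\<dots> \<longleftrightarrow> U (d@[x]) \<and> \<not>(\<exists>b. (x,b) \<in> Mbase n \<and> U (d@[b])) \<and> \<not>(\<exists>a. (a,x) \<in> Mbase n \<and> U (d@[a]))"
    unfolding out inn by blast
  finally show ?thesis unfolding Us[OF ld] .
qed



lemma sl_nB: "x \<noteq> Bt \<Longrightarrow> sl L k x = L" by (simp add: sl_def)
lemma sl_B: "sl L k Bt = {\<sigma>. insert (Suc k) \<sigma> \<in> L}" by (simp add: sl_def)

lemma crit_snoc:
  assumes n: "n \<ge> 1" and ld: "length d = k"
  shows "d@[x] \<in> Crit L (Suc k) n \<longleftrightarrow>
    (x = Mn 0 \<and> d \<in> Crit L k n) \<or>
    (x = Pl (n-1) \<and> d \<in> Crit L k n \<and> d \<notin> Crit {\<sigma>. insert (Suc k) \<sigma> \<in> L} k n) \<or>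
    (x = Bt \<and> d \<in> Crit {\<sigma>. insert (Suc k) \<sigma> \<in> L} k n \<and> d \<notin> Crit L k n)"
proof (cases x)
  case (Mn i)
  show ?thesis
  proof (cases i)
    case 0
    have a1: "\<not>(\<exists>b. (Mn 0,b)\<in>Mbase n)" "\<not>(\<exists>a. (a,Mn 0)\<in>Mbase n)" by (auto simp: Mbase_def)
    have v: "valid_dcell n (Mn 0)" using n by (simp add: valid_dcell_def)
    show ?thesis unfolding crit_snoc0[OF assms] Mn 0 using a1 v sl_nB[of "Mn 0"] by auto
  next
    case (Suc i')
    show ?thesis
    proof (cases "i < n")
      case True
      have "(Mn i, Pl i') \<in> Mbase n" using True Suc by (auto simp: Mbase_def)
      moreover have "valid_dcell n (Pl i')" "valid_dcell n (Mn i)" using True Suc by (auto simp: valid_dcell_def)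
      ultimately have "\<exists>b. (Mn i,b) \<in> Mbase n \<and> valid_dcell n b \<and> d \<in> Crit (sl L k b) k n"
        if "d \<in> Crit L k n" using that sl_nB[of "Pl i'" L k] by auto
      thus ?thesis unfolding crit_snoc0[OF assms] Mn using Suc sl_nB[of "Mn i" L k] by auto
    next
      case False
      hence "\<not> valid_dcell n (Mn i)" by (simp add: valid_dcell_def)
      thus ?thesis unfolding crit_snoc0[OF assms] Mn using Suc by auto
    qed
  qed
next
  case (Pl i)
  have nb: "\<not>(\<exists>b. (Pl i, b) \<in> Mbase n)" by (auto simp: Mbase_def)
  show ?thesis
  proof (cases "i = n - 1")
    case True
    have "(a, Pl i) \<in> Mbase n \<longleftrightarrow> a = Bt" for a using True n by (auto simp: Mbase_def)
    moreover have "valid_dcell n Bt" "valid_dcell n (Pl i)" using True n by (auto simp: valid_dcell_def)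
    ultimately show ?thesis unfolding crit_snoc0[OF assms] Pl using nb True sl_nB[of "Pl i" L k] sl_B[of L k] by auto
  next
    case False
    show ?thesis
    proof (cases "i < n")
      case True
      have "(Mn (Suc i), Pl i) \<in> Mbase n" using True False by (auto simp: Mbase_def)
      moreover have "valid_dcell n (Mn (Suc i))" "valid_dcell n (Pl i)" using True False by (auto simp: valid_dcell_def)
      ultimately have "\<exists>a. (a, Pl i) \<in> Mbase n \<and> valid_dcell n a \<and> d \<in> Crit (sl L k a) k n"
        if "d \<in> Crit L k n" using that sl_nB[of "Mn (Suc i)" L k] by auto
      thus ?thesis unfolding crit_snoc0[OF assms] Pl using False sl_nB[of "Pl i" L k] by auto
    next
      case F2: False
      hence "\<not> valid_dcell n (Pl i)" by (simp add: valid_dcell_def)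
      thus ?thesis unfolding crit_snoc0[OF assms] Pl using False F2 by auto
    qed
  qed
next
  case Bt
  have nb: "\<not>(\<exists>a. (a, Bt) \<in> Mbase n)" by (auto simp: Mbase_def)
  have "(Bt, b) \<in> Mbase n \<longleftrightarrow> b = Pl (n-1)" for b by (auto simp: Mbase_def)
  moreover have "valid_dcell n Bt" "valid_dcell n (Pl (n-1))" using n by (auto simp: valid_dcell_def)
  ultimately show ?thesis unfolding crit_snoc0[OF assms] Bt using nb sl_nB[of "Pl (n-1)" L k] sl_B[of L k] by auto
qed


lemma supp_sub: "supp c \<subseteq> {1..length c}" unfolding supp_def by auto

lemma Crit_cong:
  assumes "\<And>\<sigma>. \<sigma> \<subseteq> {1..k} \<Longrightarrow> \<sigma> \<in> L \<longleftrightarrow> \<sigma> \<in> L'"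
  shows "Crit L k n = Crit L' k n"
proof -
  have Z: "ZL L k n = ZL L' k n"
    unfolding ZL_def pcells_def using assms supp_sub by blast
  have G: "GL L k n = GL L' k n" unfolding GL_def Z ..
  have "Mupto L k n j = Mupto L' k n j" for j by (induction j) (simp_all add: G)
  thus ?thesis unfolding Crit_def Mmatch_def Z by simp
qed

lemma Crit_len: "c \<in> Crit L k n \<Longrightarrow> length c = k"
  unfolding Crit_def using ZL_len by blast

lemma Crit0: "Crit L 0 n = (if {} \<in> L then {[]} else {})"
proof -
  have "supp [] = {}" by (simp add: supp_def)
  thus ?thesis unfolding Crit_def Mmatch_def ZL_def pcells_def verts_def by auto
qed

lemma crit_set:
  assumes n: "n \<ge> 1"
  shows "Crit L (Suc k) n = ext_minus (Crit L k n) \<union> (ext_plus n (Crit L k n) - ext_plus n (Crit {\<sigma>. insert (Suc k) \<sigma> \<in> L} k n))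
     \<union> (ext_bullet (Crit {\<sigma>. insert (Suc k) \<sigma> \<in> L} k n) - ext_bullet (Crit L k n))"
  (is "?L = ?R")
proof
  show "?L \<subseteq> ?R"
  proof
    fix c assume c: "c \<in> ?L"
    then obtain d x where dx: "c = d@[x]" "length d = k" using Crit_len snoc_ex by blast
    show "c \<in> ?R" using c unfolding dx crit_snoc[OF n dx(2)] ext_minus_def ext_plus_def ext_bullet_def by auto
  qed
next
  show "?R \<subseteq> ?L"
  proof
    fix c assume c: "c \<in> ?R"
    then obtain d x where dx: "c = d@[x]" "length d = k"
      unfolding ext_minus_def ext_plus_def ext_bullet_def using Crit_len by blast
    show "c \<in> ?L" using c unfolding dx crit_snoc[OF n dx(2)] ext_minus_def ext_plus_def ext_bullet_def by auto
  qed
qed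

lemma crit_cells: "n \<ge> 1 \<Longrightarrow> c \<in> Crit L k n \<Longrightarrow> set c \<subseteq> {Mn 0, Pl (n - 1), Bt}"
proof (induction k arbitrary: L c)
  case 0
  then show ?case using Crit_len by fastforce
next
  case (Suc k)
  then obtain d x where dx: "c = d@[x]" "length d = k" using Crit_len snoc_ex by blast
  have "(x = Mn 0 \<or> x = Pl (n-1) \<or> x = Bt) \<and> (d \<in> Crit L k n \<or> d \<in> Crit {\<sigma>. insert (Suc k) \<sigma> \<in> L} k n)"
    using Suc.prems unfolding dx crit_snoc[OF Suc.prems(1) dx(2)] by blast
  thus ?case using Suc.IH[OF Suc.prems(1)] dx by auto
qed

theorem proposition3p4:
  fixes n m :: nat and K :: "nat set set"
  assumes "n \<ge> 1" and "simplicial_complex m K" and "{} \<in> K"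
  shows "(1 \<le> m \<longrightarrow>
            Crit (restr K 1) 1 n = (if {1} \<in> K then {[Mn 0]} else {[Mn 0], [Pl (n - 1)]}))
       \<and> (\<forall>k \<in> {1..m - 1}.
            Crit (restr K (k + 1)) (k + 1) n =
              (ext_minus (Crit (restr K k) k n) \<union> ext_plus n (Crit (restr K k) k n)
                 \<union> ext_bullet (Crit (link (restr K (k + 1)) (k + 1)) k n))
              - (ext_bullet (Crit (restr K k) k n)
                 \<union> ext_plus n (Crit (link (restr K (k + 1)) (k + 1)) k n)))
       \<and> (\<forall>c \<in> Crit K m n. set c \<subseteq> {Mn 0, Pl (n - 1), Bt})"
proof (intro conjI impI ballI)
  have down: "\<And>\<sigma> \<tau>. \<sigma> \<in> K \<Longrightarrow> \<tau> \<subseteq> \<sigma> \<Longrightarrow> \<tau> \<in> K" using assms(2) unfolding simplicial_complex_def by blast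
  have cA: "Crit (restr K (Suc k)) k n = Crit (restr K k) k n" for k
    by (rule Crit_cong) (auto simp: restr_def)
  have cB: "Crit {\<sigma>. insert (Suc k) \<sigma> \<in> restr K (Suc k)} k n = Crit (link (restr K (Suc k)) (Suc k)) k n" for k
  proof (rule Crit_cong)
    fix \<sigma> :: "nat set" assume s: "\<sigma> \<subseteq> {1..k}"
    show "\<sigma> \<in> {\<sigma>. insert (Suc k) \<sigma> \<in> restr K (Suc k)} \<longleftrightarrow> \<sigma> \<in> link (restr K (Suc k)) (Suc k)"
    proof
      assume h: "\<sigma> \<in> {\<sigma>. insert (Suc k) \<sigma> \<in> restr K (Suc k)}"
      hence "insert (Suc k) \<sigma> \<in> K" by (simp add: restr_def)
      hence "\<sigma> \<in> K" using down by blast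
      thus "\<sigma> \<in> link (restr K (Suc k)) (Suc k)" using h s by (auto simp: link_def restr_def)
    qed (auto simp: link_def)
  qed
  have step: "Crit (restr K (Suc k)) (Suc k) n =
     ext_minus (Crit (restr K k) k n) \<union> (ext_plus n (Crit (restr K k) k n) - ext_plus n (Crit (link (restr K (Suc k)) (Suc k)) k n))
     \<union> (ext_bullet (Crit (link (restr K (Suc k)) (Suc k)) k n) - ext_bullet (Crit (restr K k) k n))" for k
    using crit_set[OF assms(1), of "restr K (Suc k)" k] unfolding cA cB .
  show "Crit (restr K 1) 1 n = (if {1} \<in> K then {[Mn 0]} else {[Mn 0], [Pl (n - 1)]})"
  proof -
    have e0: "{} \<in> restr K 0" using assms(3) by (simp add: restr_def)
    have e1: "{} \<in> link (restr K (Suc 0)) (Suc 0) \<longleftrightarrow> {1} \<in> K" using assms(3) by (auto simp: link_def restr_def)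
    show ?thesis using step[of 0] e0 e1 unfolding Crit0 ext_minus_def ext_plus_def ext_bullet_def
      by (auto split: if_splits)
  qed
  fix k assume "k \<in> {1..m-1}"
  show "Crit (restr K (k + 1)) (k + 1) n =
              (ext_minus (Crit (restr K k) k n) \<union> ext_plus n (Crit (restr K k) k n)
                 \<union> ext_bullet (Crit (link (restr K (k + 1)) (k + 1)) k n))
              - (ext_bullet (Crit (restr K k) k n)
                 \<union> ext_plus n (Crit (link (restr K (k + 1)) (k + 1)) k n))"
    using step[of k] unfolding Suc_eq_plus1 ext_minus_def ext_plus_def ext_bullet_def by auto
next
  fix c assume "c \<in> Crit K m n"
  thus "set c \<subseteq> {Mn 0, Pl (n - 1), Bt}" using crit_cells assms(1) by blast
qed

end
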